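(* In the planted clique setting below with $\rho\in(0,1)$, the vector $w$ satisfies $w_0=\rho$ and, for every graph $\alpha$ with $|\alpha|\ge1$, \[ |w_\alpha|\le(|\alpha|+1)^{|\alpha|}(1-\rho)^{-2|\alpha|^2}\rho^{|V(\alpha)|}. \]
   Context: Let $v\in\{0,1\}^n$ have i.i.d. $\mathrm{Bernoulli}(\rho)$ entries and let the clique edge set be $X=\{\{i,j\}: i<j,\ v_iv_j=1\}$. Index vectors $\alpha\in\{0,1\}^{\binom n2}$ are identified with (simple) graphs on vertex set $[n]$; $|\alpha|$ is the number of edges, $V(\alpha)$ the set of vertices spanned by the edges, $\beta\le\alpha$ means $\beta$ is a subgraph of $\alpha$ (edge sets), and $\beta\lneq\alpha$ means a proper subgraph. Define $c_\alpha=\rho^{|V(\alpha)\cup\{1\}|}$ and $M_{\beta\alpha}=\mathbf{1}_{\beta\le\alpha}\Pr[\alpha\setminus X=\beta]$, where $\alpha\setminus X$ is the set of edges of $\alpha$ that are not in $X$. Define $w_\alpha$ recursively (over graphs of increasing size) by $w_\alpha=\frac{1}{M_{\alpha\alpha}}\big(c_\alpha-\sum_{\beta\lneq\alpha}w_\beta M_{\beta\alpha}\big)$. *)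

theory Defs
  imports "HOL-Probability.Probability"
begin

definition all_edges :: "nat \<Rightarrow> nat set set" where
  "all_edges n = {{i, j} | i j. 1 \<le> i \<and> i < j \<and> j \<le> n}"

definition is_graph :: "nat \<Rightarrow> nat set set \<Rightarrow> bool" where
  "is_graph n \<alpha> \<longleftrightarrow> \<alpha> \<subseteq> all_edges n"

definition verts :: "nat set set \<Rightarrow> nat set" where
  "verts \<alpha> = \<Union>\<alpha>"

definition vdist :: "nat \<Rightarrow> real \<Rightarrow> (nat \<Rightarrow> bool) pmf" where
  "vdist n \<rho> = Pi_pmf {1..n} False (\<lambda>_. bernoulli_pmf \<rho>)"

definition clique_edges :: "nat \<Rightarrow> (nat \<Rightarrow> bool) \<Rightarrow> nat set set" where
  "clique_edges n v = {{i, j} | i j. 1 \<le> i \<and> i < j \<and> j \<le> n \<and> v i \<and> v j}"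

definition cvec :: "real \<Rightarrow> nat set set \<Rightarrow> real" where
  "cvec \<rho> \<alpha> = \<rho> ^ card (verts \<alpha> \<union> {1})"

definition Mmat :: "nat \<Rightarrow> real \<Rightarrow> nat set set \<Rightarrow> nat set set \<Rightarrow> real" where
  "Mmat n \<rho> \<beta> \<alpha> = (if \<beta> \<subseteq> \<alpha>
     then measure_pmf.prob (vdist n \<rho>) {v. \<alpha> - clique_edges n v = \<beta>} else 0)"

function wvec :: "nat \<Rightarrow> real \<Rightarrow> nat set set \<Rightarrow> real" where
  "wvec n \<rho> \<alpha> = (if finite \<alpha> then
     (cvec \<rho> \<alpha> - (\<Sum>\<beta>\<in>{\<beta>. \<beta> \<subset> \<alpha>}. wvec n \<rho> \<beta> * Mmat n \<rho> \<beta> \<alpha>)) / Mmat n \<rho> \<alpha> \<alpha>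
   else 0)"
  by auto
termination
  by (relation "Wellfounded.measure (\<lambda>(n, \<rho>, \<alpha>). card \<alpha>)") (auto intro: psubset_card_mono)

end

theory Submission
  imports Defs
begin

lemma prob_all_true:
  assumes S: "S \<subseteq> {1..n}" and r: "0 \<le> \<rho>" "\<rho> \<le> 1"
  shows "measure_pmf.prob (vdist n \<rho>) {v. \<forall>i\<in>S. v i} = \<rho> ^ card S"
proof -
  have fS: "finite S" using S finite_subset by blast
  have "{v. \<forall>i\<in>S. v i} = Pi {1..n} (\<lambda>i. if i \<in> S then {True} else UNIV)"
    using S by (auto simp: Pi_def)
  hence "measure_pmf.prob (vdist n \<rho>) {v. \<forall>i\<in>S. v i}
      = (\<Prod>i\<in>{1..n}. measure_pmf.prob (bernoulli_pmf \<rho>) (if i \<in> S then {True} else UNIV))"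
    unfolding vdist_def by (simp add: measure_Pi_pmf_Pi)
  also have "\<dots> = (\<Prod>i\<in>{1..n}. if i \<in> S then \<rho> else 1)"
    by (intro prod.cong) (auto simp: measure_pmf_single r)
  also have "\<dots> = \<rho> ^ card S"
    using S by (simp add: prod.If_cases Int_absorb1)
  finally show ?thesis .
qed

lemma prob_all_false:
  assumes S: "S \<subseteq> {1..n}" and r: "0 \<le> \<rho>" "\<rho> \<le> 1"
  shows "measure_pmf.prob (vdist n \<rho>) {v. \<forall>i\<in>S. \<not> v i} = (1 - \<rho>) ^ card S"
proof -
  have "{v. \<forall>i\<in>S. \<not> v i} = Pi {1..n} (\<lambda>i. if i \<in> S then {False} else UNIV)"
    using S by (auto simp: Pi_def)
  hence "measure_pmf.prob (vdist n \<rho>) {v. \<forall>i\<in>S. \<not> v i}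
      = (\<Prod>i\<in>{1..n}. measure_pmf.prob (bernoulli_pmf \<rho>) (if i \<in> S then {False} else UNIV))"
    unfolding vdist_def by (simp add: measure_Pi_pmf_Pi)
  also have "\<dots> = (\<Prod>i\<in>{1..n}. if i \<in> S then 1 - \<rho> else 1)"
    by (intro prod.cong) (auto simp: measure_pmf_single r)
  also have "\<dots> = (1 - \<rho>) ^ card S"
    using S by (simp add: prod.If_cases Int_absorb1)
  finally show ?thesis .
qed

lemma sum_pow_card:
  fixes x :: real
  assumes "finite A"
  shows "(\<Sum>B\<in>Pow A. x ^ card B) = (x + 1) ^ card A"
  using assms
proof (induction A rule: finite_induct)
  case empty
  then show ?case by simp
next
  case (insert a A)
  have disj: "Pow A \<inter> insert a ` Pow A = {}" using insert by auto
  have inj: "inj_on (insert a) (Pow A)" using insert by (auto simp: inj_on_def)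
  have "(\<Sum>B\<in>Pow (insert a A). x ^ card B)
      = (\<Sum>B\<in>Pow A. x ^ card B) + (\<Sum>B\<in>insert a ` Pow A. x ^ card B)"
    unfolding Pow_insert using insert disj by (intro sum.union_disjoint) auto
  also have "(\<Sum>B\<in>insert a ` Pow A. x ^ card B) = (\<Sum>B\<in>Pow A. x ^ card (insert a B))"
    using inj by (simp add: sum.reindex)
  also have "\<dots> = (\<Sum>B\<in>Pow A. x * x ^ card B)"
  proof (intro sum.cong refl)
    fix B assume "B \<in> Pow A"
    hence "finite B" "a \<notin> B" using insert finite_subset by auto
    thus "x ^ card (insert a B) = x * x ^ card B" by simp
  qed
  finally show ?case using insert by (simp add: sum_distrib_left[symmetric] algebra_simps)
qed

lemma graph_facts:
  assumes "is_graph n \<alpha>"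
  shows "finite \<alpha>" "verts \<alpha> \<subseteq> {1..n}" "finite (verts \<alpha>)"
        "card (verts \<alpha>) \<le> 2 * card \<alpha>"
proof -
  have sub: "\<alpha> \<subseteq> all_edges n" using assms by (simp add: is_graph_def)
  have fa: "finite (all_edges n)"
  proof -
    have "all_edges n \<subseteq> Pow {1..n}" by (auto simp: all_edges_def)
    thus ?thesis by (rule finite_subset) simp
  qed
  show fin: "finite \<alpha>" using sub fa finite_subset by blast
  show vs: "verts \<alpha> \<subseteq> {1..n}" using sub by (auto simp: verts_def all_edges_def)
  show "finite (verts \<alpha>)" using vs finite_subset by blast
  have c2: "\<And>e. e \<in> \<alpha> \<Longrightarrow> card e = 2" using sub by (auto simp: all_edges_def)
  have "card (verts \<alpha>) \<le> sum card \<alpha>" unfolding verts_def by (rule card_Union_le_sum_card)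
  also have "\<dots> = 2 * card \<alpha>" using c2 by simp
  finally show "card (verts \<alpha>) \<le> 2 * card \<alpha>" .
qed

lemma is_graph_mono: "is_graph n \<alpha> \<Longrightarrow> \<beta> \<subseteq> \<alpha> \<Longrightarrow> is_graph n \<beta>"
  by (auto simp: is_graph_def)

lemma M_diag_lower:
  assumes g: "is_graph n \<alpha>" and r: "0 \<le> \<rho>" "\<rho> \<le> 1"
  shows "(1 - \<rho>) ^ card (verts \<alpha>) \<le> Mmat n \<rho> \<alpha> \<alpha>"
proof -
  have "{v. \<forall>i\<in>verts \<alpha>. \<not> v i} \<subseteq> {v. \<alpha> - clique_edges n v = \<alpha>}"
    by (auto simp: verts_def clique_edges_def)
  hence "measure_pmf.prob (vdist n \<rho>) {v. \<forall>i\<in>verts \<alpha>. \<not> v i}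
     \<le> measure_pmf.prob (vdist n \<rho>) {v. \<alpha> - clique_edges n v = \<alpha>}"
    by (intro measure_pmf.finite_measure_mono) auto
  thus ?thesis using prob_all_false[OF graph_facts(2)[OF g] r] by (simp add: Mmat_def)
qed

lemma M_upper:
  assumes g: "is_graph n \<alpha>" and b: "\<beta> \<subseteq> \<alpha>" and r: "0 \<le> \<rho>" "\<rho> \<le> 1"
  shows "Mmat n \<rho> \<beta> \<alpha> \<le> \<rho> ^ card (verts (\<alpha> - \<beta>))"
proof -
  have "{v. \<alpha> - clique_edges n v = \<beta>} \<subseteq> {v. \<forall>i\<in>verts (\<alpha> - \<beta>). v i}"
    by (auto simp: verts_def clique_edges_def)
  hence "measure_pmf.prob (vdist n \<rho>) {v. \<alpha> - clique_edges n v = \<beta>}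
     \<le> measure_pmf.prob (vdist n \<rho>) {v. \<forall>i\<in>verts (\<alpha> - \<beta>). v i}"
    by (intro measure_pmf.finite_measure_mono) auto
  moreover have "verts (\<alpha> - \<beta>) \<subseteq> {1..n}"
    using graph_facts(2)[OF g] by (auto simp: verts_def)
  ultimately show ?thesis using prob_all_true[OF _ r] b by (simp add: Mmat_def)
qed

lemma w_empty:
  assumes "0 \<le> \<rho>" "\<rho> \<le> 1"
  shows "wvec n \<rho> {} = \<rho>"
proof -
  have "Mmat n \<rho> {} {} = 1" by (simp add: Mmat_def)
  moreover have "cvec \<rho> {} = \<rho>" by (simp add: cvec_def verts_def)
  ultimately show ?thesis by (subst wvec.simps) simp
qed

lemma main_bound:
  assumes r: "0 < \<rho>" "\<rho> < 1"
  shows "is_graph n \<alpha> \<Longrightarrow> \<bar>wvec n \<rho> \<alpha>\<bar> \<le> real (card \<alpha> + 1) ^ card \<alpha>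
            * (1 / (1 - \<rho>)) ^ (2 * card \<alpha> ^ 2) * \<rho> ^ card (verts \<alpha>)"
proof (induction "card \<alpha>" arbitrary: \<alpha> rule: less_induct)
  case less
  define q where "q = 1 / (1 - \<rho>)"
  have q1: "1 \<le> q" using r by (simp add: q_def)
  have r0: "0 \<le> \<rho>" "\<rho> \<le> 1" using r by auto
  note gf = graph_facts[OF less.prems]
  define k where "k = card \<alpha>"
  define V where "V = card (verts \<alpha>)"
  show ?case
  proof (cases "k = 0")
    case True
    hence "\<alpha> = {}" using gf(1) k_def by simp
    thus ?thesis using w_empty[OF r0] r by (simp add: verts_def)
  next
    case False
    then obtain m where km: "k = Suc m" by (cases k) auto
    define D where "D = q ^ (2 * m ^ 2)"
    have D1: "1 \<le> D" unfolding D_def using q1 by simp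
    define S where "S = {\<beta>. \<beta> \<subset> \<alpha>}"
    have finS: "finite S" unfolding S_def using gf(1) by (rule finite_subset[rotated, OF finite_Pow_iff[THEN iffD2]]) auto
    define Ma where "Ma = Mmat n \<rho> \<alpha> \<alpha>"
    have Malow: "(1 - \<rho>) ^ (2 * k) \<le> Ma"
    proof -
      have "(1 - \<rho>) ^ (2 * k) \<le> (1 - \<rho>) ^ V"
        using r gf(4) by (intro power_decreasing) (auto simp: V_def k_def)
      thus ?thesis using M_diag_lower[OF less.prems r0] by (simp add: Ma_def V_def)
    qed
    have Mapos: "0 < Ma" using Malow r
      by (meson diff_gt_0_iff_gt order_less_le_trans zero_less_power)
    have invMa: "1 / Ma \<le> q ^ (2 * k)"
    proof -
      have "1 / Ma \<le> 1 / (1 - \<rho>) ^ (2 * k)"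
        using Malow r Mapos by (intro divide_left_mono) auto
      thus ?thesis by (simp add: q_def power_one_over)
    qed
    have w_eq: "wvec n \<rho> \<alpha> = (cvec \<rho> \<alpha> - (\<Sum>\<beta>\<in>S. wvec n \<rho> \<beta> * Mmat n \<rho> \<beta> \<alpha>)) / Ma"
      by (subst wvec.simps) (simp add: gf(1) S_def Ma_def)
    have c_le: "\<bar>cvec \<rho> \<alpha>\<bar> \<le> \<rho> ^ V"
    proof -
      have "card (verts \<alpha>) \<le> card (verts \<alpha> \<union> {1})" using gf(3) by (intro card_mono) auto
      hence "\<rho> ^ card (verts \<alpha> \<union> {1}) \<le> \<rho> ^ V"
        using r0 by (intro power_decreasing) (auto simp: V_def)
      thus ?thesis using r0 by (simp add: cvec_def)
    qed
    have term_le: "\<bar>wvec n \<rho> \<beta> * Mmat n \<rho> \<beta> \<alpha>\<bar> \<le> D * real k ^ card \<beta> * \<rho> ^ V"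
      if b: "\<beta> \<in> S" for \<beta>
    proof -
      have bs: "\<beta> \<subset> \<alpha>" using b S_def by simp
      have cb: "card \<beta> < k" using bs gf(1) k_def psubset_card_mono by blast
      have gb: "is_graph n \<beta>" using is_graph_mono[OF less.prems] bs by blast
      have IH: "\<bar>wvec n \<rho> \<beta>\<bar> \<le> real (card \<beta> + 1) ^ card \<beta>
            * q ^ (2 * card \<beta> ^ 2) * \<rho> ^ card (verts \<beta>)"
        using less.hyps[OF _ gb] cb k_def q_def by simp
      have Mnn: "0 \<le> Mmat n \<rho> \<beta> \<alpha>" by (simp add: Mmat_def)
      have Mle: "Mmat n \<rho> \<beta> \<alpha> \<le> \<rho> ^ card (verts (\<alpha> - \<beta>))"
        using M_upper[OF less.prems _ r0] bs by blast
      have a1: "real (card \<beta> + 1) ^ card \<beta> \<le> real k ^ card \<beta>"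
        using cb by (intro power_mono) auto
      have a2: "q ^ (2 * card \<beta> ^ 2) \<le> D"
        unfolding D_def using q1 cb km
        by (intro power_increasing) (auto intro!: power_mono)
      have unionV: "verts \<alpha> = verts \<beta> \<union> verts (\<alpha> - \<beta>)"
        using bs by (auto simp: verts_def)
      have fvb: "finite (verts \<beta>)" "finite (verts (\<alpha> - \<beta>))"
        using gf(3) unionV by (metis finite_Un)+
      have "V \<le> card (verts \<beta>) + card (verts (\<alpha> - \<beta>))"
        unfolding V_def unionV by (rule card_Un_le)
      hence a3: "\<rho> ^ card (verts \<beta>) * \<rho> ^ card (verts (\<alpha> - \<beta>)) \<le> \<rho> ^ V"
        using r0 by (simp add: power_add[symmetric] power_decreasing)
      have "\<bar>wvec n \<rho> \<beta> * Mmat n \<rho> \<beta> \<alpha>\<bar> = \<bar>wvec n \<rho> \<beta>\<bar> * Mmat n \<rho> \<beta> \<alpha>"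
        using Mnn by (simp add: abs_mult)
      also have "\<dots> \<le> (real (card \<beta> + 1) ^ card \<beta> * q ^ (2 * card \<beta> ^ 2) * \<rho> ^ card (verts \<beta>))
                       * \<rho> ^ card (verts (\<alpha> - \<beta>))"
        using IH Mle Mnn r0 by (intro mult_mono) auto
      also have "\<dots> = (real (card \<beta> + 1) ^ card \<beta> * q ^ (2 * card \<beta> ^ 2))
                       * (\<rho> ^ card (verts \<beta>) * \<rho> ^ card (verts (\<alpha> - \<beta>)))"
        by (simp add: algebra_simps)
      also have "\<dots> \<le> (real k ^ card \<beta> * D) * \<rho> ^ V"
        using a1 a2 a3 r0 q1 D1 by (intro mult_mono) auto
      finally show ?thesis by (simp add: algebra_simps)
    qed
    have sumS: "(\<Sum>\<beta>\<in>S. real k ^ card \<beta>) = (real k + 1) ^ k - real k ^ k"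
    proof -
      have "Pow \<alpha> = insert \<alpha> S" unfolding S_def by auto
      hence "(\<Sum>\<beta>\<in>Pow \<alpha>. real k ^ card \<beta>) = real k ^ k + (\<Sum>\<beta>\<in>S. real k ^ card \<beta>)"
        using finS by (simp add: S_def k_def)
      thus ?thesis using sum_pow_card[OF gf(1), of "real k"] k_def by simp
    qed
    have "\<bar>wvec n \<rho> \<alpha>\<bar> = \<bar>cvec \<rho> \<alpha> - (\<Sum>\<beta>\<in>S. wvec n \<rho> \<beta> * Mmat n \<rho> \<beta> \<alpha>)\<bar> * (1 / Ma)"
      using Mapos unfolding w_eq by (simp del: wvec.simps)
    also have "\<dots> \<le> (\<rho> ^ V + (\<Sum>\<beta>\<in>S. D * real k ^ card \<beta> * \<rho> ^ V)) * q ^ (2 * k)"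
    proof (intro mult_mono)
      have "\<bar>cvec \<rho> \<alpha> - (\<Sum>\<beta>\<in>S. wvec n \<rho> \<beta> * Mmat n \<rho> \<beta> \<alpha>)\<bar>
          \<le> \<bar>cvec \<rho> \<alpha>\<bar> + \<bar>\<Sum>\<beta>\<in>S. wvec n \<rho> \<beta> * Mmat n \<rho> \<beta> \<alpha>\<bar>" by (rule abs_triangle_ineq4)
      also have "\<dots> \<le> \<rho> ^ V + (\<Sum>\<beta>\<in>S. \<bar>wvec n \<rho> \<beta> * Mmat n \<rho> \<beta> \<alpha>\<bar>)"
        using c_le by (intro add_mono sum_abs)
      also have "\<dots> \<le> \<rho> ^ V + (\<Sum>\<beta>\<in>S. D * real k ^ card \<beta> * \<rho> ^ V)"
        using term_le by (intro add_mono sum_mono) auto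
      finally show "\<bar>cvec \<rho> \<alpha> - (\<Sum>\<beta>\<in>S. wvec n \<rho> \<beta> * Mmat n \<rho> \<beta> \<alpha>)\<bar>
          \<le> \<rho> ^ V + (\<Sum>\<beta>\<in>S. D * real k ^ card \<beta> * \<rho> ^ V)" .
      show "1 / Ma \<le> q ^ (2 * k)" by (rule invMa)
      show "0 \<le> 1 / Ma" using Mapos by simp
      show "0 \<le> \<rho> ^ V + (\<Sum>\<beta>\<in>S. D * real k ^ card \<beta> * \<rho> ^ V)"
        using r0 D1 by (intro add_nonneg_nonneg sum_nonneg) auto
    qed
    also have "\<dots> = (1 + D * ((real k + 1) ^ k - real k ^ k)) * \<rho> ^ V * q ^ (2 * k)"
      by (simp add: sum_distrib_left[symmetric] sum_distrib_right[symmetric] sumS algebra_simps)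
    also have "\<dots> \<le> (D * (real k + 1) ^ k) * \<rho> ^ V * q ^ (2 * k)"
    proof -
      have kk: "1 \<le> real k ^ k" using km by (intro one_le_power) simp
      have "1 \<le> D * real k ^ k" using mult_mono[OF D1 kk] D1 by simp
      hence "1 + D * ((real k + 1) ^ k - real k ^ k) \<le> D * (real k + 1) ^ k"
        by (simp add: algebra_simps)
      thus ?thesis using r0 q1 by (intro mult_right_mono) auto
    qed
    also have "\<dots> = (real k + 1) ^ k * q ^ (2 * m ^ 2 + 2 * k) * \<rho> ^ V"
      by (simp add: D_def power_add algebra_simps)
    also have "\<dots> \<le> (real k + 1) ^ k * q ^ (2 * k ^ 2) * \<rho> ^ V"
    proof -
      have "2 * m ^ 2 + 2 * k \<le> 2 * k ^ 2" using km by (simp add: power2_eq_square)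
      hence "q ^ (2 * m ^ 2 + 2 * k) \<le> q ^ (2 * k ^ 2)" using q1 by (intro power_increasing)
      thus ?thesis using r0 by (intro mult_right_mono mult_left_mono) auto
    qed
    finally show ?thesis by (simp add: k_def V_def q_def algebra_simps del: wvec.simps)
  qed
qed

theorem mainTheorem9:
  fixes n :: nat and \<rho> :: real
  assumes "n \<ge> 1" and "0 < \<rho>" and "\<rho> < 1"
  shows "wvec n \<rho> {} = \<rho> \<and>
    (\<forall>\<alpha>. is_graph n \<alpha> \<and> card \<alpha> \<ge> 1 \<longrightarrow>
       \<bar>wvec n \<rho> \<alpha>\<bar> \<le> real (card \<alpha> + 1) ^ card \<alpha> * (1 - \<rho>) powr (- 2 * real (card \<alpha>)^2)
                         * \<rho> ^ card (verts \<alpha>))"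
proof
  show "wvec n \<rho> {} = \<rho>" using w_empty assms by simp
  show "\<forall>\<alpha>. is_graph n \<alpha> \<and> card \<alpha> \<ge> 1 \<longrightarrow>
       \<bar>wvec n \<rho> \<alpha>\<bar> \<le> real (card \<alpha> + 1) ^ card \<alpha> * (1 - \<rho>) powr (- 2 * real (card \<alpha>)^2)
                         * \<rho> ^ card (verts \<alpha>)"
  proof (intro allI impI)
    fix \<alpha> assume h: "is_graph n \<alpha> \<and> card \<alpha> \<ge> 1"
    have p: "(1 - \<rho>) powr (- 2 * real (card \<alpha>)^2) = (1 / (1 - \<rho>)) ^ (2 * card \<alpha> ^ 2)"
    proof -
      have "(1 - \<rho>) powr (- 2 * real (card \<alpha>)^2) = inverse ((1 - \<rho>) powr real (2 * card \<alpha> ^ 2))"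
        using assms by (simp add: powr_minus[symmetric])
      also have "\<dots> = inverse ((1 - \<rho>) ^ (2 * card \<alpha> ^ 2))"
        using assms powr_realpow[of "1 - \<rho>" "2 * card \<alpha> ^ 2"] by simp
      also have "\<dots> = (1 / (1 - \<rho>)) ^ (2 * card \<alpha> ^ 2)"
        by (simp add: power_one_over inverse_eq_divide)
      finally show ?thesis .
    qed
    show "\<bar>wvec n \<rho> \<alpha>\<bar> \<le> real (card \<alpha> + 1) ^ card \<alpha> * (1 - \<rho>) powr (- 2 * real (card \<alpha>)^2)
                         * \<rho> ^ card (verts \<alpha>)"
      unfolding p using main_bound[OF assms(2,3)] h by blast
  qed
qed

end
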